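(* Let $P$ be a finite graded bowtie-free poset of rank $n$ with $\hat0,\hat1$ and a good $\mathcal{H}_n(0)$ action $U_1,\dots,U_{n-1}$, let $\mathfrak m_0$ be the unique maximal chain with empty descent set, and let $\mathfrak m\ne\mathfrak m_0$ be a maximal chain. Suppose $U_{i_1}\cdots U_{i_r}(\mathfrak m)=\mathfrak m_0$ and $U_{j_1}\cdots U_{j_s}(\mathfrak m)=\mathfrak m_0$ are both restless. Then there exist a word in the braid class of $U_{i_1}\cdots U_{i_r}$ and a word in the braid class of $U_{j_1}\cdots U_{j_s}$ which both end on the right with the same letter $U_i$.
   Context: Bowtie-free: no distinct $a,b,c,d$ with $a$ and $b$ each covering both $c$ and $d$. A good $\mathcal{H}_n(0)$ action is a family $U_1,\dots,U_{n-1}$ of maps on the set $\mathcal{M}(P)$ of maximal chains with: $U_i(\mathfrak m)$ agrees with $\mathfrak m$ except possibly at rank $i$; $U_i^2=U_i$; $U_iU_j=U_jU_i$ for $|i-j|\ge2$; $U_iU_{i+1}U_i=U_{i+1}U_iU_{i+1}$; and $\omega F_P=\mathrm{ch}(\chi_P)$ ($\chi_P$ the character of the $\mathcal{H}_n(0)$-module $\mathbb{C}\mathcal{M}(P)$ with $T_i=-U_i$, $F_P$ Ehrenborg's flag quasisymmetric function $\sum x_1^{\mathrm{rk}(t_0,t_1)}\cdots x_k^{\mathrm{rk}(t_{k-1},t_k)}$ over multichains $\hat0=t_0\le\cdots\le t_{k-1}<t_k=\hat1$, $\omega(L_{S,n})=L_{[n-1]\setminus S,n}$ on Gessel's fundamental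 quasisymmetric functions, $\mathrm{ch}(\chi_S)=L_{S,n}$ for the one-dimensional characters $\chi_S$: $T_i\mapsto-1$ for $i\in S$, $0$ otherwise). The descent set of $\mathfrak m$ is $\{i:U_i(\mathfrak m)\ne\mathfrak m\}$; such a $P$ has exactly one maximal chain $\mathfrak m_0$ with empty descent set. An expression $U_{i_1}\cdots U_{i_r}(\mathfrak m)=\mathfrak m'$ is restless if $U_{i_r}(\mathfrak m)\ne\mathfrak m$ and $U_{i_j}\cdots U_{i_r}(\mathfrak m)\ne U_{i_{j+1}}\cdots U_{i_r}(\mathfrak m)$ for $j=1,\dots,r-1$. Two words are in the same braid class if one is obtained from the other by repeatedly applying $U_aU_b\leftrightarrow U_bU_a$ ($|a-b|\ge2$) and $U_aU_{a+1}U_a\leftrightarrow U_{a+1}U_aU_{a+1}$. *)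

theory Defs
  imports Main
begin

definition plt :: "('a \<Rightarrow> 'a \<Rightarrow> bool) \<Rightarrow> 'a \<Rightarrow> 'a \<Rightarrow> bool" where
  "plt le x y \<longleftrightarrow> le x y \<and> x \<noteq> y"

definition is_poset :: "'a set \<Rightarrow> ('a \<Rightarrow> 'a \<Rightarrow> bool) \<Rightarrow> bool" where
  "is_poset P le \<longleftrightarrow>
     (\<forall>x\<in>P. le x x) \<and>
     (\<forall>x\<in>P. \<forall>y\<in>P. le x y \<and> le y x \<longrightarrow> x = y) \<and>
     (\<forall>x\<in>P. \<forall>y\<in>P. \<forall>z\<in>P. le x y \<and> le y z \<longrightarrow> le x z)"

definition covers :: "'a set \<Rightarrow> ('a \<Rightarrow> 'a \<Rightarrow> bool) \<Rightarrow> 'a \<Rightarrow> 'a \<Rightarrow> bool" where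
  "covers P le x y \<longleftrightarrow> x \<in> P \<and> y \<in> P \<and> plt le x y \<and> \<not> (\<exists>z\<in>P. plt le x z \<and> plt le z y)"

definition graded_bounded :: "'a set \<Rightarrow> ('a \<Rightarrow> 'a \<Rightarrow> bool) \<Rightarrow> 'a \<Rightarrow> 'a \<Rightarrow> ('a \<Rightarrow> nat) \<Rightarrow> nat \<Rightarrow> bool" where
  "graded_bounded P le zero_el one_el rho n \<longleftrightarrow>
     finite P \<and> is_poset P le \<and> zero_el \<in> P \<and> one_el \<in> P \<and>
     (\<forall>x\<in>P. le zero_el x \<and> le x one_el) \<and>
     rho zero_el = 0 \<and> rho one_el = n \<and>
     (\<forall>x y. covers P le x y \<longrightarrow> rho y = Suc (rho x))"

definition bowtie_free :: "'a set \<Rightarrow> ('a \<Rightarrow> 'a \<Rightarrow> bool) \<Rightarrow> bool" where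
  "bowtie_free P le \<longleftrightarrow>
     \<not> (\<exists>a b c d. distinct [a, b, c, d] \<and>
          covers P le c a \<and> covers P le d a \<and> covers P le c b \<and> covers P le d b)"

definition is_chain :: "'a set \<Rightarrow> ('a \<Rightarrow> 'a \<Rightarrow> bool) \<Rightarrow> 'a set \<Rightarrow> bool" where
  "is_chain P le C \<longleftrightarrow> C \<subseteq> P \<and> (\<forall>x\<in>C. \<forall>y\<in>C. le x y \<or> le y x)"

definition is_maximal_chain :: "'a set \<Rightarrow> ('a \<Rightarrow> 'a \<Rightarrow> bool) \<Rightarrow> 'a set \<Rightarrow> bool" where
  "is_maximal_chain P le C \<longleftrightarrow> is_chain P le C \<and> (\<forall>D. is_chain P le D \<and> C \<subseteq> D \<longrightarrow> D = C)"

text \<open>Maximal chains, each written as the strictly increasing list of its elements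
  (so in a graded poset of rank n, entry i is the element of rank i).\<close>
definition max_chains :: "'a set \<Rightarrow> ('a \<Rightarrow> 'a \<Rightarrow> bool) \<Rightarrow> 'a list set" where
  "max_chains P le = {m. sorted_wrt (plt le) m \<and> is_maximal_chain P le (set m)}"

definition apply_word :: "(nat \<Rightarrow> 'b \<Rightarrow> 'b) \<Rightarrow> nat list \<Rightarrow> 'b \<Rightarrow> 'b" where
  "apply_word U w m = foldr U w m"

definition restless :: "(nat \<Rightarrow> 'b \<Rightarrow> 'b) \<Rightarrow> nat list \<Rightarrow> 'b \<Rightarrow> bool" where
  "restless U w m \<longleftrightarrow>
     (\<forall>j < length w. apply_word U (drop j w) m \<noteq> apply_word U (drop (Suc j) w) m)"

definition descent_set :: "(nat \<Rightarrow> 'b \<Rightarrow> 'b) \<Rightarrow> nat \<Rightarrow> 'b \<Rightarrow> nat set" where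
  "descent_set U n m = {i \<in> {1..<n}. U i m \<noteq> m}"

inductive braid_step :: "nat list \<Rightarrow> nat list \<Rightarrow> bool" where
  comm: "a + 2 \<le> b \<or> b + 2 \<le> a \<Longrightarrow> braid_step (u @ [a, b] @ v) (u @ [b, a] @ v)"
| braid1: "braid_step (u @ [a, Suc a, a] @ v) (u @ [Suc a, a, Suc a] @ v)"
| braid2: "braid_step (u @ [Suc a, a, Suc a] @ v) (u @ [a, Suc a, a] @ v)"

text \<open>Same braid class: reflexive-transitive closure of braid moves (which are symmetric).\<close>
definition braid_equiv :: "nat list \<Rightarrow> nat list \<Rightarrow> bool" where
  "braid_equiv = braid_step\<^sup>*\<^sup>*"

text \<open>A monomial x_1^{alpha 0} x_2^{alpha 1} ... is encoded by alpha :: nat => nat;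
  a formal power series is its coefficient function.\<close>

text \<open>Ehrenborg's flag quasisymmetric function F_P: coefficient of the monomial alpha is
  the number of multichains zero_el = t_0 <= ... <= t_{k-1} < t_k = one_el (k >= 1)
  with alpha (j-1) = rk(t_{j-1}, t_j) for j = 1..k and alpha j = 0 for j >= k.\<close>
definition flag_F :: "'a set \<Rightarrow> ('a \<Rightarrow> 'a \<Rightarrow> bool) \<Rightarrow> 'a \<Rightarrow> 'a \<Rightarrow> ('a \<Rightarrow> nat) \<Rightarrow> (nat \<Rightarrow> nat) \<Rightarrow> int" where
  "flag_F P le zero_el one_el rho alpha = int (card {ts.
      2 \<le> length ts \<and> set ts \<subseteq> P \<and> hd ts = zero_el \<and> last ts = one_el \<and>
      (\<forall>j. Suc j < length ts \<longrightarrow> le (ts ! j) (ts ! Suc j)) \<and>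
      plt le (ts ! (length ts - 2)) (last ts) \<and>
      (\<forall>j. alpha j = (if Suc j < length ts then rho (ts ! Suc j) - rho (ts ! j) else 0))})"

text \<open>Gessel's fundamental quasisymmetric function L_{S,n}
  = sum over i_1 <= ... <= i_n with i_j < i_{j+1} for j in S of x_{i_1} ... x_{i_n}
  (variable x_{v+1} encoded by v).\<close>
definition fundL :: "nat \<Rightarrow> nat set \<Rightarrow> (nat \<Rightarrow> nat) \<Rightarrow> int" where
  "fundL n S alpha = int (card {ix :: nat list.
      length ix = n \<and>
      (\<forall>j. Suc j < n \<longrightarrow> ix ! j \<le> ix ! Suc j) \<and>
      (\<forall>j\<in>S. 1 \<le> j \<and> j < n \<longrightarrow> ix ! (j - 1) < ix ! j) \<and>
      (\<forall>v. alpha v = count_list ix v)})"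

text \<open>omega applied to ch = (sum_S c S * L_{S,n}); omega(L_{S,n}) = L_{[n-1]-S,n}.\<close>
definition omega_ch :: "nat \<Rightarrow> (nat set \<Rightarrow> int) \<Rightarrow> (nat \<Rightarrow> nat) \<Rightarrow> int" where
  "omega_ch n c alpha = (\<Sum>S\<in>Pow {1..<n}. c S * fundL n ({1..<n} - S) alpha)"

text \<open>The character chi_P of C M(P) (with T_i = -U_i) is written as sum_S c S * chi_S,
  tested on all products T_{i_1}...T_{i_r} (which span H_n(0)); the signs (-1)^r on both
  sides cancel, the trace of U_{i_1}...U_{i_r} on C M(P) is its number of fixed maximal
  chains, and chi_S(T_{i_1}...T_{i_r}) = (-1)^r [all i_j in S].
  Then ch(chi_P) = sum_S c S * L_{S,n}.\<close>
definition good_action ::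
  "'a set \<Rightarrow> ('a \<Rightarrow> 'a \<Rightarrow> bool) \<Rightarrow> 'a \<Rightarrow> 'a \<Rightarrow> ('a \<Rightarrow> nat) \<Rightarrow> nat \<Rightarrow> (nat \<Rightarrow> 'a list \<Rightarrow> 'a list) \<Rightarrow> bool" where
  "good_action P le zero_el one_el rho n U \<longleftrightarrow>
     (\<forall>i\<in>{1..<n}. \<forall>m\<in>max_chains P le.
        U i m \<in> max_chains P le \<and> (\<forall>j. j \<noteq> i \<longrightarrow> U i m ! j = m ! j) \<and> U i (U i m) = U i m) \<and>
     (\<forall>i\<in>{1..<n}. \<forall>j\<in>{1..<n}. (i + 2 \<le> j \<or> j + 2 \<le> i) \<longrightarrow>
        (\<forall>m\<in>max_chains P le. U i (U j m) = U j (U i m))) \<and>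
     (\<forall>i. 1 \<le> i \<and> Suc i < n \<longrightarrow>
        (\<forall>m\<in>max_chains P le. U i (U (Suc i) (U i m)) = U (Suc i) (U i (U (Suc i) m)))) \<and>
     (\<exists>c :: nat set \<Rightarrow> int.
        (\<forall>w. set w \<subseteq> {1..<n} \<longrightarrow>
           int (card {m \<in> max_chains P le. apply_word U w m = m})
             = (\<Sum>S\<in>Pow {1..<n}. if set w \<subseteq> S then c S else 0)) \<and>
        (\<forall>alpha. omega_ch n c alpha = flag_F P le zero_el one_el rho alpha))"

end

theory Submission
  imports Defs
begin

lemma apply_word_Nil[simp]: "apply_word U [] m = m"
  by (simp add: apply_word_def)
lemma apply_word_Cons[simp]: "apply_word U (i # w) m = U i (apply_word U w m)"
  by (simp add: apply_word_def)
lemma apply_word_append[simp]: "apply_word U (w @ u) m = apply_word U w (apply_word U u m)"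
  by (simp add: apply_word_def)

lemma restless_Nil[simp]: "restless U [] m"
  by (simp add: restless_def)

lemma restless_Cons[simp]:
  "restless U (i # u) m \<longleftrightarrow> U i (apply_word U u m) \<noteq> apply_word U u m \<and> restless U u m"
proof
  assume r: "restless U (i # u) m"
  have "U i (apply_word U u m) \<noteq> apply_word U u m"
    using r[unfolded restless_def, rule_format, of 0] by simp
  moreover have "restless U u m"
    unfolding restless_def
  proof (intro allI impI)
    fix j assume "j < length u"
    then show "apply_word U (drop j u) m \<noteq> apply_word U (drop (Suc j) u) m"
      using r[unfolded restless_def, rule_format, of "Suc j"] by simp
  qed
  ultimately show "U i (apply_word U u m) \<noteq> apply_word U u m \<and> restless U u m" by blast
next
  assume h: "U i (apply_word U u m) \<noteq> apply_word U u m \<and> restless U u m"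
  show "restless U (i # u) m"
    unfolding restless_def
  proof (intro allI impI)
    fix j assume "j < length (i # u)"
    then show "apply_word U (drop j (i # u)) m \<noteq> apply_word U (drop (Suc j) (i # u)) m"
      using h by (cases j) (auto simp: restless_def)
  qed
qed

lemma restless_append[simp]:
  "restless U (w @ u) m \<longleftrightarrow> restless U u m \<and> restless U w (apply_word U u m)"
  by (induction w) auto

lemma braid_step_inv: "braid_step u v \<Longrightarrow> length u = length v \<and> set u = set v"
  by (induction rule: braid_step.induct) auto

lemma braid_equiv_inv: "braid_equiv u v \<Longrightarrow> length u = length v \<and> set u = set v"
  unfolding braid_equiv_def
  by (induction rule: rtranclp_induct) (auto dest: braid_step_inv)

lemma braid_step_app: "braid_step u v \<Longrightarrow> braid_step (u @ z) (v @ z)"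
proof (induction rule: braid_step.induct)
  case (comm a b u v) then show ?case using braid_step.comm[of a b u "v @ z"] by simp
next
  case (braid1 u a v) then show ?case using braid_step.braid1[of u a "v @ z"] by simp
next
  case (braid2 u a v) then show ?case using braid_step.braid2[of u a "v @ z"] by simp
qed

lemma braid_equiv_app: "braid_equiv u v \<Longrightarrow> braid_equiv (u @ z) (v @ z)"
  unfolding braid_equiv_def
  by (induction rule: rtranclp_induct) (auto intro: rtranclp.rtrancl_into_rtrancl braid_step_app)

lemma braid_equiv_refl: "braid_equiv u u" by (simp add: braid_equiv_def)
lemma braid_equiv_trans: "braid_equiv u v \<Longrightarrow> braid_equiv v w \<Longrightarrow> braid_equiv u w"
  unfolding braid_equiv_def by simp

lemma braid_equiv_comm: "a + 2 \<le> b \<or> b + 2 \<le> a \<Longrightarrow> braid_equiv (v @ [a, b]) (v @ [b, a])"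
  unfolding braid_equiv_def using braid_step.comm[of a b v "[]"] by auto

lemma braid_equiv_braid: "b = Suc a \<or> a = Suc b \<Longrightarrow> braid_equiv (v @ [a, b, a]) (v @ [b, a, b])"
  unfolding braid_equiv_def using braid_step.braid1[of v a "[]"] braid_step.braid2[of v b "[]"] by auto


locale setting =
  fixes P :: "'a set" and le :: "'a \<Rightarrow> 'a \<Rightarrow> bool" and zero_el one_el :: 'a
    and rho :: "'a \<Rightarrow> nat" and n :: nat and U :: "nat \<Rightarrow> 'a list \<Rightarrow> 'a list"
    and m0 :: "'a list"
  assumes gb: "graded_bounded P le zero_el one_el rho n"
    and bf: "bowtie_free P le"
    and ga: "good_action P le zero_el one_el rho n U"
    and m0: "m0 \<in> max_chains P le" and d0: "descent_set U n m0 = {}"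
begin

lemma poset: "is_poset P le" using gb unfolding graded_bounded_def by (elim conjE)
lemma refl': "x \<in> P \<Longrightarrow> le x x" using poset unfolding is_poset_def by (elim conjE) (erule bspec)
lemma antisym': "x \<in> P \<Longrightarrow> y \<in> P \<Longrightarrow> le x y \<Longrightarrow> le y x \<Longrightarrow> x = y"
  using poset unfolding is_poset_def by (elim conjE) blast
lemma trans': "x \<in> P \<Longrightarrow> y \<in> P \<Longrightarrow> z \<in> P \<Longrightarrow> le x y \<Longrightarrow> le y z \<Longrightarrow> le x z"
  using poset unfolding is_poset_def by (elim conjE) blast
lemma zero_le: "x \<in> P \<Longrightarrow> le zero_el x" using gb by (simp add: graded_bounded_def)
lemma le_one: "x \<in> P \<Longrightarrow> le x one_el" using gb by (simp add: graded_bounded_def)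
lemma zero_in: "zero_el \<in> P" and one_in: "one_el \<in> P" using gb by (auto simp: graded_bounded_def)

context
  fixes m assumes mc: "m \<in> max_chains P le"
begin

lemma sw: "sorted_wrt (plt le) m" using mc by (simp add: max_chains_def)
lemma subP: "set m \<subseteq> P" using mc by (simp add: max_chains_def is_maximal_chain_def is_chain_def)
lemma maxi: "is_chain P le D \<Longrightarrow> set m \<subseteq> D \<Longrightarrow> D = set m"
  using mc by (simp add: max_chains_def is_maximal_chain_def)
lemma nthP: "k < length m \<Longrightarrow> m ! k \<in> P" using subP by auto
lemma nth_lt: "k < l \<Longrightarrow> l < length m \<Longrightarrow> plt le (m ! k) (m ! l)"
  using sw by (simp add: sorted_wrt_iff_nth_less)
lemma nth_le: "k \<le> l \<Longrightarrow> l < length m \<Longrightarrow> le (m ! k) (m ! l)"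
  using nth_lt[of k l] refl'[OF nthP[of k]] by (cases "k = l") (auto simp: plt_def)
lemma nth_dist: "k < length m \<Longrightarrow> l < length m \<Longrightarrow> k \<noteq> l \<Longrightarrow> m ! k \<noteq> m ! l"
  using nth_lt[of k l] nth_lt[of l k] by (cases "k < l") (auto simp: plt_def)

lemma ins_chain:
  assumes "z \<in> P" and "\<forall>y\<in>set m. le y z \<or> le z y"
  shows "z \<in> set m"
proof -
  have c: "\<forall>x\<in>set m. \<forall>y\<in>set m. le x y \<or> le y x"
    using mc unfolding max_chains_def is_maximal_chain_def is_chain_def by blast
  have "is_chain P le (insert z (set m))"
    unfolding is_chain_def
  proof (intro conjI ballI)
    show "insert z (set m) \<subseteq> P" using subP assms(1) by blast
  next
    fix x y assume "x \<in> insert z (set m)" "y \<in> insert z (set m)"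
    then show "le x y \<or> le y x" using c assms refl' by auto
  qed
  then have "insert z (set m) = set m" using maxi by blast
  then show ?thesis by blast
qed

lemma zero_mem: "zero_el \<in> set m"
  using ins_chain[OF zero_in] zero_le subP by blast
lemma one_mem: "one_el \<in> set m"
  using ins_chain[OF one_in] le_one subP by blast

lemma nonempty: "m \<noteq> []" using zero_mem by auto

lemma first: "m ! 0 = zero_el"
proof -
  obtain l where l: "l < length m" "m ! l = zero_el" using zero_mem by (auto simp: in_set_conv_nth)
  show ?thesis
  proof (rule ccontr)
    assume ne: "m ! 0 \<noteq> zero_el"
    then have "l > 0" using l by (cases l) auto
    then have "le (m ! 0) zero_el" using nth_lt[of 0 l] l by (simp add: plt_def)
    moreover have "le zero_el (m ! 0)" using zero_le[OF nthP[of 0]] l by (cases m) auto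
    ultimately show False using antisym'[of "m ! 0" zero_el] zero_in nthP[of 0] l ne by (cases m) auto
  qed
qed

lemma lastm: "m ! (length m - 1) = one_el"
proof -
  obtain l where l: "l < length m" "m ! l = one_el" using one_mem by (auto simp: in_set_conv_nth)
  show ?thesis
  proof (rule ccontr)
    assume ne: "m ! (length m - 1) \<noteq> one_el"
    then have "l < length m - 1" using l by (cases "l = length m - 1") auto
    then have "le one_el (m ! (length m - 1))" using nth_lt[of l "length m - 1"] l by (simp add: plt_def)
    moreover have "le (m ! (length m - 1)) one_el" using le_one[OF nthP[of "length m - 1"]] l by (cases m) auto
    ultimately show False using antisym'[of one_el "m ! (length m - 1)"] one_in nthP[of "length m - 1"] l ne by (cases m) auto
  qed
qed

lemma cover: assumes k: "Suc k < length m" shows "covers P le (m ! k) (m ! Suc k)"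
proof -
  have "\<not> (\<exists>z\<in>P. plt le (m ! k) z \<and> plt le z (m ! Suc k))"
  proof
    assume "\<exists>z\<in>P. plt le (m ! k) z \<and> plt le z (m ! Suc k)"
    then obtain z where z: "z \<in> P" "plt le (m ! k) z" "plt le z (m ! Suc k)" by blast
    have "\<forall>y\<in>set m. le y z \<or> le z y"
    proof
      fix y assume "y \<in> set m"
      then obtain l where l: "l < length m" "y = m ! l" by (auto simp: in_set_conv_nth)
      show "le y z \<or> le z y"
      proof (cases "l \<le> k")
        case True
        then have "le y (m ! k)" using nth_le l k by simp
        then show ?thesis using trans'[of y "m ! k" z] z nthP[of l] nthP[of k] l k by (simp add: plt_def)
      next
        case False
        then have "le (m ! Suc k) y" using nth_le l k by simp
        then show ?thesis using trans'[of z "m ! Suc k" y] z nthP[of l] nthP[of "Suc k"] l k by (simp add: plt_def)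
      qed
    qed
    then have "z \<in> set m" using ins_chain z by blast
    then obtain l where l: "l < length m" "z = m ! l" by (auto simp: in_set_conv_nth)
    show False
    proof (cases "l \<le> k")
      case True
      then have "le z (m ! k)" using nth_le l k by simp
      then show False using antisym'[of z "m ! k"] z nthP[of k] k by (simp add: plt_def)
    next
      case False
      then have "le (m ! Suc k) z" using nth_le l k by simp
      then show False using antisym'[of z "m ! Suc k"] z nthP[of "Suc k"] k by (simp add: plt_def)
    qed
  qed
  then show ?thesis using nthP k nth_lt[of k "Suc k"] by (simp add: covers_def)
qed

lemma rho_nth: "k < length m \<Longrightarrow> rho (m ! k) = k"
proof (induction k)
  case 0 then show ?case using first gb by (simp add: graded_bounded_def)
next
  case (Suc k)
  then have "rho (m ! Suc k) = Suc (rho (m ! k))"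
    using cover[of k] gb by (simp add: graded_bounded_def)
  then show ?case using Suc by simp
qed

lemma len: "length m = Suc n"
proof -
  have "rho (m ! (length m - 1)) = length m - 1" using rho_nth nonempty by simp
  then have "length m - 1 = n" using lastm gb by (simp add: graded_bounded_def)
  then show ?thesis using nonempty by (cases m) auto
qed

end


abbreviation "MC \<equiv> max_chains P le"

lemma ga1:
  "\<forall>i\<in>{1..<n}. \<forall>m\<in>MC. U i m \<in> MC \<and> (\<forall>j. j \<noteq> i \<longrightarrow> U i m ! j = m ! j) \<and> U i (U i m) = U i m"
  using ga unfolding good_action_def by (elim conjE)
lemma ga2: "\<forall>i\<in>{1..<n}. \<forall>j\<in>{1..<n}. (i + 2 \<le> j \<or> j + 2 \<le> i) \<longrightarrow>
        (\<forall>m\<in>MC. U i (U j m) = U j (U i m))"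
  using ga unfolding good_action_def by (elim conjE)
lemma ga3: "\<forall>i. 1 \<le> i \<and> Suc i < n \<longrightarrow>
        (\<forall>m\<in>MC. U i (U (Suc i) (U i m)) = U (Suc i) (U i (U (Suc i) m)))"
  using ga unfolding good_action_def by (elim conjE)
lemmas ga_parts = ga1 ga2 ga3

lemma U_mc: "i \<in> {1..<n} \<Longrightarrow> m \<in> MC \<Longrightarrow> U i m \<in> MC"
  using ga_parts(1) by blast
lemma U_oth: "i \<in> {1..<n} \<Longrightarrow> m \<in> MC \<Longrightarrow> j \<noteq> i \<Longrightarrow> U i m ! j = m ! j"
  using ga_parts(1) by blast
lemma U_idem: "i \<in> {1..<n} \<Longrightarrow> m \<in> MC \<Longrightarrow> U i (U i m) = U i m"
  using ga_parts(1) by blast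
lemma U_comm: "i \<in> {1..<n} \<Longrightarrow> j \<in> {1..<n} \<Longrightarrow> i + 2 \<le> j \<or> j + 2 \<le> i \<Longrightarrow> m \<in> MC
   \<Longrightarrow> U i (U j m) = U j (U i m)"
  using ga_parts(2) by blast
lemma U_braid: "p \<in> {1..<n} \<Longrightarrow> q \<in> {1..<n} \<Longrightarrow> q = Suc p \<or> p = Suc q \<Longrightarrow> m \<in> MC
   \<Longrightarrow> U p (U q (U p m)) = U q (U p (U q m))"
proof -
  assume a: "p \<in> {1..<n}" "q \<in> {1..<n}" "q = Suc p \<or> p = Suc q" "m \<in> MC"
  show ?thesis
  proof (cases "q = Suc p")
    case True then show ?thesis using ga_parts(3) a by auto
  next
    case False then have "p = Suc q" using a by simp
    then show ?thesis using ga_parts(3) a by auto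
  qed
qed

lemma D_neq: assumes "i \<in> {1..<n}" "m \<in> MC" "U i m \<noteq> m" shows "U i m ! i \<noteq> m ! i"
proof
  assume e: "U i m ! i = m ! i"
  have "length (U i m) = length m" using len[OF U_mc[OF assms(1,2)]] len[OF assms(2)] by simp
  moreover have "\<forall>j. U i m ! j = m ! j" using e U_oth[OF assms(1,2)] by metis
  ultimately have "U i m = m" by (simp add: nth_equalityI)
  then show False using assms(3) by simp
qed

lemma core:
  assumes p: "p \<in> {1..<n}" and q: "q \<in> {1..<n}" and adj: "q = Suc p \<or> p = Suc q"
    and m: "m \<in> MC" and dp: "U p m \<noteq> m" and dq: "U q m \<noteq> m"
    and e: "U p (U q m) ! p = U p m ! p"
  shows False
proof -
  define x1 where "x1 = U p m"
  define y1 where "y1 = U q m"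
  define y2 where "y2 = U p y1"
  have pq: "p \<noteq> q" using adj by auto
  have x1m: "x1 \<in> MC" using U_mc p m x1_def by simp
  have y1m: "y1 \<in> MC" using U_mc q m y1_def by simp
  have y2m: "y2 \<in> MC" using U_mc p y1m y2_def by simp
  have lens: "length m = Suc n" "length x1 = Suc n" "length y1 = Suc n" "length y2 = Suc n"
    using len m x1m y1m y2m by auto
  have pl: "p < Suc n" "q < Suc n" using p q by auto
  have a_ne: "m ! p \<noteq> x1 ! p" using D_neq[OF p m dp] x1_def by simp
  have b_ne: "m ! q \<noteq> y1 ! q" using D_neq[OF q m dq] y1_def by simp
  have x1q: "x1 ! q = m ! q" using U_oth[OF p m] pq x1_def by simp
  have y1p: "y1 ! p = m ! p" using U_oth[OF q m] pq y1_def by simp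
  have y2q: "y2 ! q = y1 ! q" using U_oth[OF p y1m] pq y2_def by simp
  have y2p: "y2 ! p = x1 ! p" using e x1_def y1_def y2_def by simp
  have dm: "m ! p \<noteq> m ! q" using nth_dist[OF m] lens pl pq by simp
  have dx: "x1 ! p \<noteq> x1 ! q" using nth_dist[OF x1m] lens pl pq by simp
  have dy1: "y1 ! p \<noteq> y1 ! q" using nth_dist[OF y1m] lens pl pq by simp
  have dy2: "y2 ! p \<noteq> y2 ! q" using nth_dist[OF y2m] lens pl pq by simp
  show False
  proof (cases "q = Suc p")
    case True
    have c1: "covers P le (m ! p) (m ! q)" using cover[OF m, of p] True lens pl by simp
    have c2: "covers P le (x1 ! p) (x1 ! q)" using cover[OF x1m, of p] True lens pl by simp
    have c3: "covers P le (y1 ! p) (y1 ! q)" using cover[OF y1m, of p] True lens pl by simp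
    have c4: "covers P le (y2 ! p) (y2 ! q)" using cover[OF y2m, of p] True lens pl by simp
    have "distinct [m ! q, y1 ! q, m ! p, x1 ! p]"
      using a_ne b_ne dm dx dy1 dy2 x1q y1p y2q y2p by auto
    moreover have "covers P le (m ! p) (m ! q) \<and> covers P le (x1 ! p) (m ! q) \<and>
       covers P le (m ! p) (y1 ! q) \<and> covers P le (x1 ! p) (y1 ! q)"
      using c1 c2 c3 c4 x1q y1p y2q y2p by simp
    ultimately show False using bf unfolding bowtie_free_def by blast
  next
    case False
    then have F: "p = Suc q" using adj by simp
    have c1: "covers P le (m ! q) (m ! p)" using cover[OF m, of q] F lens pl by simp
    have c2: "covers P le (x1 ! q) (x1 ! p)" using cover[OF x1m, of q] F lens pl by simp
    have c3: "covers P le (y1 ! q) (y1 ! p)" using cover[OF y1m, of q] F lens pl by simp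
    have c4: "covers P le (y2 ! q) (y2 ! p)" using cover[OF y2m, of q] F lens pl by simp
    have "distinct [m ! p, x1 ! p, m ! q, y1 ! q]"
      using a_ne b_ne dm dx dy1 dy2 x1q y1p y2q y2p by auto
    moreover have "covers P le (m ! q) (m ! p) \<and> covers P le (y1 ! q) (m ! p) \<and>
       covers P le (m ! q) (x1 ! p) \<and> covers P le (y1 ! q) (x1 ! p)"
      using c1 c2 c3 c4 x1q y1p y2q y2p by simp
    ultimately show False using bf unfolding bowtie_free_def by blast
  qed
qed

lemma A1: assumes p: "p \<in> {1..<n}" and q: "q \<in> {1..<n}" and adj: "q = Suc p \<or> p = Suc q"
    and m: "m \<in> MC" and dp: "U p m \<noteq> m" and dq: "U q m \<noteq> m"
  shows "U q (U p m) \<noteq> U p m"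
proof
  assume h: "U q (U p m) = U p m"
  have pq: "p \<noteq> q" using adj by auto
  have "U q (U p (U q m)) = U p m"
    using U_braid[OF p q adj m] h U_idem[OF p m] by simp
  then have "U p (U q m) ! p = U p m ! p"
    using U_oth[OF q U_mc[OF p U_mc[OF q m]], of p] pq by simp
  then show False using core[OF p q adj m dp dq] by simp
qed

lemma A2: assumes p: "p \<in> {1..<n}" and q: "q \<in> {1..<n}" and adj: "q = Suc p \<or> p = Suc q"
    and m: "m \<in> MC" and dp: "U p m \<noteq> m" and dq: "U q m \<noteq> m"
  shows "U p (U q (U p m)) \<noteq> U q (U p m)"
proof
  assume h: "U p (U q (U p m)) = U q (U p m)"
  have pq: "p \<noteq> q" using adj by auto
  have "U q (U p (U q m)) = U q (U p m)"
    using U_braid[OF p q adj m] h by simp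
  then have "U p (U q m) ! p = U q (U p m) ! p"
    using U_oth[OF q U_mc[OF p U_mc[OF q m]], of p] pq by simp
  also have "\<dots> = U p m ! p" using U_oth[OF q U_mc[OF p m], of p] pq by simp
  finally show False using core[OF p q adj m dp dq] by simp
qed

lemma Cm: assumes p: "p \<in> {1..<n}" and q: "q \<in> {1..<n}" and far: "p + 2 \<le> q \<or> q + 2 \<le> p"
    and m: "m \<in> MC" and dp: "U p m \<noteq> m" and dq: "U q m \<noteq> m"
  shows "U q (U p m) \<noteq> U p m"
proof
  assume h: "U q (U p m) = U p m"
  have pq: "p \<noteq> q" using far by auto
  have "U p (U q m) = U p m" using U_comm[OF p q far m] h by simp
  then have "U q m ! q = U p m ! q" using U_oth[OF p U_mc[OF q m], of q] pq by simp
  also have "\<dots> = m ! q" using U_oth[OF p m] pq by simp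
  finally show False using D_neq[OF q m dq] by simp
qed


lemma m0_fix: "k \<in> {1..<n} \<Longrightarrow> U k m0 = m0"
  using d0 unfolding descent_set_def by blast

lemma E:
  "length w = N \<Longrightarrow> m \<in> MC \<Longrightarrow> set w \<subseteq> {1..<n} \<Longrightarrow> restless U w m \<Longrightarrow> apply_word U w m = m0
   \<Longrightarrow> k \<in> {1..<n} \<Longrightarrow> U k m \<noteq> m \<Longrightarrow>
   \<exists>v. braid_equiv w (v @ [k]) \<and> set v \<subseteq> {1..<n} \<and> length v + 1 = length w \<and>
       restless U (v @ [k]) m \<and> apply_word U (v @ [k]) m = m0"
proof (induction N arbitrary: w m k rule: less_induct)
  case (less N)
  show ?case
  proof (cases w rule: rev_exhaust)
    case Nil
    then have "m = m0" using less.prems by simp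
    then show ?thesis using m0_fix less.prems by simp
  next
    case (snoc w2 i)
    define x1 where "x1 = U i m"
    have i: "i \<in> {1..<n}" using less.prems snoc by auto
    have k: "k \<in> {1..<n}" using less.prems by simp
    have m: "m \<in> MC" using less.prems by simp
    have di: "U i m \<noteq> m" using less.prems snoc by simp
    have dk: "U k m \<noteq> m" using less.prems by simp
    have x1m: "x1 \<in> MC" using U_mc[OF i m] x1_def by simp
    have w2s: "set w2 \<subseteq> {1..<n}" using less.prems snoc by auto
    have w2r: "restless U w2 x1" using less.prems snoc x1_def by simp
    have w2a: "apply_word U w2 x1 = m0" using less.prems snoc x1_def by simp
    have w2l: "length w2 < N" using less.prems snoc by simp
    show ?thesis
    proof (cases "i = k")
      case True
      then show ?thesis using less.prems snoc braid_equiv_refl by auto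
    next
      case False
      show ?thesis
      proof (cases "i + 2 \<le> k \<or> k + 2 \<le> i")
        case far: True
        have dk1: "U k x1 \<noteq> x1" using Cm[OF i k far m di dk] x1_def by simp
        obtain v1 where v1: "braid_equiv w2 (v1 @ [k])" "set v1 \<subseteq> {1..<n}" "length v1 + 1 = length w2"
          "restless U (v1 @ [k]) x1" "apply_word U (v1 @ [k]) x1 = m0"
          using less.IH[OF w2l refl x1m w2s w2r w2a k dk1] by blast
        have far': "k + 2 \<le> i \<or> i + 2 \<le> k" using far by auto
        have dk2: "U i (U k m) \<noteq> U k m" using Cm[OF k i far' m dk di] .
        have cm: "U i (U k m) = U k x1" using U_comm[OF i k far m] x1_def by simp
        have "braid_equiv w (v1 @ [k, i])"
          using braid_equiv_app[OF v1(1), of "[i]"] snoc by simp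
        then have be: "braid_equiv w ((v1 @ [i]) @ [k])"
          using braid_equiv_trans braid_equiv_comm[OF far', of v1] by simp
        show ?thesis
          apply (rule exI[of _ "v1 @ [i]"])
          using be v1 i dk dk2 cm snoc by simp
      next
        case near: False
        have adj: "k = Suc i \<or> i = Suc k" using near False by auto
        have adj': "i = Suc k \<or> k = Suc i" using adj by auto
        have dk1: "U k x1 \<noteq> x1" using A1[OF i k adj m di dk] x1_def by simp
        obtain v1 where v1: "braid_equiv w2 (v1 @ [k])" "set v1 \<subseteq> {1..<n}" "length v1 + 1 = length w2"
          "restless U (v1 @ [k]) x1" "apply_word U (v1 @ [k]) x1 = m0"
          using less.IH[OF w2l refl x1m w2s w2r w2a k dk1] by blast
        define x2 where "x2 = U k x1"
        have x2m: "x2 \<in> MC" using U_mc[OF k x1m] x2_def by simp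
        have di2: "U i x2 \<noteq> x2" using A2[OF i k adj m di dk] x1_def x2_def by simp
        have v1l: "length v1 < N" using v1(3) w2l by simp
        have v1r: "restless U v1 x2" using v1(4) x2_def by simp
        have v1a: "apply_word U v1 x2 = m0" using v1(5) x2_def by simp
        obtain v2 where v2: "braid_equiv v1 (v2 @ [i])" "set v2 \<subseteq> {1..<n}" "length v2 + 1 = length v1"
          "restless U (v2 @ [i]) x2" "apply_word U (v2 @ [i]) x2 = m0"
          using less.IH[OF v1l refl x2m v1(2) v1r v1a i di2] by blast
        have s1: "U i (U k m) \<noteq> U k m" using A1[OF k i adj' m dk di] .
        have s2: "U k (U i (U k m)) \<noteq> U i (U k m)" using A2[OF k i adj' m dk di] .
        have br: "U k (U i (U k m)) = U i x2" using U_braid[OF i k adj m] x1_def x2_def by simp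
        have "braid_equiv w (v1 @ [k, i])"
          using braid_equiv_app[OF v1(1), of "[i]"] snoc by simp
        moreover have "braid_equiv (v1 @ [k, i]) (v2 @ [i, k, i])"
          using braid_equiv_app[OF v2(1), of "[k, i]"] by simp
        moreover have "braid_equiv (v2 @ [i, k, i]) (v2 @ [k, i, k])"
          using braid_equiv_braid[OF adj] by simp
        ultimately have be: "braid_equiv w ((v2 @ [k, i]) @ [k])"
          using braid_equiv_trans by simp
        show ?thesis
          apply (rule exI[of _ "v2 @ [k, i]"])
          using be v1 v2 i k dk s1 s2 br snoc by simp
      qed
    qed
  qed
qed

end

theorem mainTheorem11:
  fixes P :: "'a set" and le :: "'a \<Rightarrow> 'a \<Rightarrow> bool" and zero_el one_el :: 'a
    and rho :: "'a \<Rightarrow> nat" and n :: nat and U :: "nat \<Rightarrow> 'a list \<Rightarrow> 'a list"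
    and m0 m :: "'a list" and iw jw :: "nat list"
  assumes "graded_bounded P le zero_el one_el rho n"
    and "bowtie_free P le"
    and "good_action P le zero_el one_el rho n U"
    and "m0 \<in> max_chains P le" and "descent_set U n m0 = {}"
    and "m \<in> max_chains P le" and "m \<noteq> m0"
    and "set iw \<subseteq> {1..<n}" and "apply_word U iw m = m0" and "restless U iw m"
    and "set jw \<subseteq> {1..<n}" and "apply_word U jw m = m0" and "restless U jw m"
  shows "\<exists>w1 w2. braid_equiv iw w1 \<and> braid_equiv jw w2 \<and> w1 \<noteq> [] \<and> w2 \<noteq> [] \<and> last w1 = last w2"
proof -
  interpret setting P le zero_el one_el rho n U m0
    using assms(1-5) by (unfold_locales) auto
  show ?thesis
  proof (cases iw rule: rev_exhaust)
    case Nil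
    then show ?thesis using assms(7,9) by simp
  next
    case (snoc w' i)
    have i: "i \<in> {1..<n}" using assms(8) snoc by auto
    have di: "U i m \<noteq> m" using assms(10) snoc by simp
    obtain v where "braid_equiv jw (v @ [i])"
      using E[OF refl assms(6) assms(11) assms(13) assms(12) i di] by blast
    then show ?thesis using snoc braid_equiv_refl by fastforce
  qed
qed

end
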